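(* Let $r\geq k+1$. Let $\mathcal{P}$ be a finite classical polar space of rank $r$ with parameter $e$ naturally embedded in $V(n,q)$, and let $H$ be a degenerate hyperplane of $\mathcal{P}$ in $V(n,q)$. Then the number of $k$-spaces of $\mathcal{P}$ contained in $H$ equals \[ \frac{q^{2r+e-k-1}+q^r-q^{r+e-1}-1}{(q^r-1)(q^{r+e-1}+1)} \] times the total number of $k$-spaces of $\mathcal{P}$.
   Context: A finite classical polar space is the geometry of totally isotropic (totally singular) subspaces of $V(n,q)=\mathbb{F}_q^n$ with respect to a non-degenerate quadratic form or non-degenerate reflexive sesquilinear form, with associated polarity $\perp$. Dimensions are algebraic: a $k$-space of $\mathcal{P}$ is a totally isotropic subspace of vector dimension $k$; the rank $r$ is the maximal such dimension and generators are the $r$-spaces. The parameter $e$ is defined by the property that every $(r-1)$-space lies in exactly $q^e+1$ generators ($e=0$ for $Q^+(2r-1,q)$, $1/2$ for $H(2r-1,q)$, $1$ for $W(2r-1,q)$ and $Q(2r,q)$, $3/2$ for $H(2r,q)$, $2$ for $Q^-(2r+1,q)$). A degenerate hyperplane of $\mathcal{P}$ is a hyperplane $H$ of $V(n,q)$ of the form $H=P^\perp$ for a point (1-space) $P$ of $\mathcal{P}$, i.e. a tangent hyperplane; then $H\cap\mathcal{P}$ is a cone with vertex $P$ over a polar space of the same type with rank $r-1$. *)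

theory Defs
  imports "HOL-Analysis.Analysis"
begin

text \<open>Vectors of V(n,q) are elements of type 'a^'n with 'a a finite field (q = CARD('a))
 and n = CARD('n). Subspaces and (vector) dimension are those of the library
 interpretation vec of vector_space for scalar multiplication (*s).\<close>

definition field_automorphism :: "('a::field \<Rightarrow> 'a) \<Rightarrow> bool" where
  "field_automorphism \<sigma> \<longleftrightarrow> bij \<sigma> \<and> (\<forall>a b. \<sigma> (a + b) = \<sigma> a + \<sigma> b) \<and> (\<forall>a b. \<sigma> (a * b) = \<sigma> a * \<sigma> b)"

definition sesquilinear ::
  "('a::field \<Rightarrow> 'a) \<Rightarrow> ('a^'n \<Rightarrow> 'a^'n \<Rightarrow> 'a) \<Rightarrow> bool" where
  "sesquilinear \<sigma> B \<longleftrightarrow> field_automorphism \<sigma> \<and>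
     (\<forall>x y z. B (x + y) z = B x z + B y z) \<and>
     (\<forall>x y z. B x (y + z) = B x y + B x z) \<and>
     (\<forall>c x y. B (c *s x) y = c * B x y) \<and>
     (\<forall>c x y. B x (c *s y) = \<sigma> c * B x y)"

definition reflexive_form :: "('a::field^'n \<Rightarrow> 'a^'n \<Rightarrow> 'a) \<Rightarrow> bool" where
  "reflexive_form B \<longleftrightarrow> (\<forall>x y. B x y = 0 \<longleftrightarrow> B y x = 0)"

definition nondegenerate_form :: "('a::field^'n \<Rightarrow> 'a^'n \<Rightarrow> 'a) \<Rightarrow> bool" where
  "nondegenerate_form B \<longleftrightarrow> (\<forall>x. (\<forall>y. B x y = 0) \<longrightarrow> x = 0)"

text \<open>A form giving a classical polar space: non-degenerate reflexive sesquilinear,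
 excluding the non-classical case of a symmetric non-alternating bilinear form in
 characteristic 2 (whose isotropic vectors only form a hyperplane).\<close>
definition classical_sesquilinear_form :: "('a::field^'n \<Rightarrow> 'a^'n \<Rightarrow> 'a) \<Rightarrow> bool" where
  "classical_sesquilinear_form B \<longleftrightarrow>
     (\<exists>\<sigma>. sesquilinear \<sigma> B \<and>
        \<not> (\<sigma> = id \<and> (1 + 1 :: 'a) = 0 \<and> \<not> (\<forall>x. B x x = 0))) \<and>
     reflexive_form B \<and> nondegenerate_form B"

definition polar_form :: "('a::field^'n \<Rightarrow> 'a) \<Rightarrow> 'a^'n \<Rightarrow> 'a^'n \<Rightarrow> 'a" where
  "polar_form Q x y = Q (x + y) - Q x - Q y"

definition quadratic_form :: "('a::field^'n \<Rightarrow> 'a) \<Rightarrow> bool" where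
  "quadratic_form Q \<longleftrightarrow> (\<forall>c x. Q (c *s x) = c^2 * Q x) \<and> sesquilinear id (polar_form Q)"

definition nondegenerate_quadratic_form :: "('a::field^'n \<Rightarrow> 'a) \<Rightarrow> bool" where
  "nondegenerate_quadratic_form Q \<longleftrightarrow> quadratic_form Q \<and>
     (\<forall>x. Q x = 0 \<and> (\<forall>y. polar_form Q x y = 0) \<longrightarrow> x = 0)"

text \<open>A finite classical polar space is given by its associated (sesqui)bilinear form B
 (defining the polarity perp) and the predicate TI of being totally isotropic /
 totally singular for subsets of V.\<close>
definition classical_polar_space ::
  "('a::field^'n \<Rightarrow> 'a^'n \<Rightarrow> 'a) \<Rightarrow> (('a^'n) set \<Rightarrow> bool) \<Rightarrow> bool" where
  "classical_polar_space B TI \<longleftrightarrow>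
     (classical_sesquilinear_form B \<and> TI = (\<lambda>U. \<forall>u\<in>U. \<forall>v\<in>U. B u v = 0)) \<or>
     (\<exists>Q. nondegenerate_quadratic_form Q \<and> B = polar_form Q \<and> TI = (\<lambda>U. \<forall>u\<in>U. Q u = 0))"

definition k_spaces :: "(('a::field^'n) set \<Rightarrow> bool) \<Rightarrow> nat \<Rightarrow> ('a^'n) set set" where
  "k_spaces TI k = {U. vec.subspace U \<and> vec.dim U = k \<and> TI U}"

definition polar_rank :: "(('a::field^'n) set \<Rightarrow> bool) \<Rightarrow> nat \<Rightarrow> bool" where
  "polar_rank TI r \<longleftrightarrow> k_spaces TI r \<noteq> {} \<and>
     (\<forall>U. vec.subspace U \<and> TI U \<longrightarrow> vec.dim U \<le> r)"

definition polar_parameter ::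
  "(('a::{finite,field}^'n) set \<Rightarrow> bool) \<Rightarrow> nat \<Rightarrow> real \<Rightarrow> bool" where
  "polar_parameter TI r e \<longleftrightarrow>
     (\<forall>L \<in> k_spaces TI (r - 1).
        real (card {G \<in> k_spaces TI r. L \<subseteq> G}) = real CARD('a) powr e + 1)"

definition perp :: "('a::field^'n \<Rightarrow> 'a^'n \<Rightarrow> 'a) \<Rightarrow> ('a^'n) set \<Rightarrow> ('a^'n) set" where
  "perp B S = {x. \<forall>s\<in>S. B s x = 0}"

end

theory Submission
  imports Defs
begin


locale psp =
  fixes B :: "'a::{finite,field}^'n \<Rightarrow> 'a^'n \<Rightarrow> 'a" and sing :: "'a^'n \<Rightarrow> bool"
  assumes B_add: "B (x + y) z = B x z + B y z"
    and B_scale: "B (c *s x) y = c * B x y"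
    and B_refl: "B x y = 0 \<longleftrightarrow> B y x = 0"
    and sing_0: "sing 0"
    and sing_add: "sing x \<Longrightarrow> sing y \<Longrightarrow> B x y = 0 \<Longrightarrow> sing (x + y)"
    and sing_scale: "sing x \<Longrightarrow> sing (c *s x)"
    and sing_B: "sing x \<Longrightarrow> B x x = 0"
begin

definition TIs :: "('a^'n) set \<Rightarrow> bool" where
  "TIs U \<longleftrightarrow> (\<forall>u\<in>U. sing u) \<and> (\<forall>u\<in>U. \<forall>v\<in>U. B u v = 0)"

lemma B_zero1[simp]: "B 0 y = 0"
  using B_scale[of 0 0 y] by simp

lemma ker_subspace: "vec.subspace {x. B x v = 0}"
  unfolding vec.subspace_def by (auto simp: B_add B_scale)

lemma ker_subspace_set: "vec.subspace {x. \<forall>v\<in>S. B x v = 0}"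
  unfolding vec.subspace_def by (auto simp: B_add B_scale)

lemma perp_alt: "perp B S = {x. \<forall>s\<in>S. B x s = 0}"
  unfolding perp_def using B_refl by blast

lemma perp_subspace: "vec.subspace (perp B S)"
  unfolding perp_alt by (rule ker_subspace_set)

lemma perp_span: "perp B (vec.span S) = perp B S"
proof
  show "perp B (vec.span S) \<subseteq> perp B S" unfolding perp_def using vec.span_base by blast
  show "perp B S \<subseteq> perp B (vec.span S)"
  proof
    fix x assume x: "x \<in> perp B S"
    have "vec.span S \<subseteq> {s. B s x = 0}"
      by (rule vec.span_minimal) (use x ker_subspace in \<open>auto simp: perp_def\<close>)
    then show "x \<in> perp B (vec.span S)" by (auto simp: perp_def)
  qed
qed

lemma TIs_span: "TIs (vec.span S) \<longleftrightarrow> TIs S"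
proof
  assume "TIs (vec.span S)" then show "TIs S" unfolding TIs_def using vec.span_base by blast
next
  assume S: "TIs S"
  have 1: "vec.span S \<subseteq> {x. \<forall>v\<in>S. B x v = 0}"
    by (rule vec.span_minimal) (use S ker_subspace_set in \<open>auto simp: TIs_def\<close>)
  have 2: "B u v = 0" if u: "u \<in> vec.span S" and v: "v \<in> vec.span S" for u v
  proof -
    have "vec.span S \<subseteq> {v. B v u = 0}"
    proof (rule vec.span_minimal)
      show "S \<subseteq> {v. B v u = 0}" using 1 u B_refl by auto
    qed (rule ker_subspace)
    with v have "B v u = 0" by auto
    then show ?thesis using B_refl by blast
  qed
  have "vec.subspace {x \<in> vec.span S. sing x}"
    unfolding vec.subspace_def using 2 sing_0 sing_add sing_scale vec.span_add vec.span_scale vec.span_zero by auto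
  then have 3: "vec.span S \<subseteq> {x \<in> vec.span S. sing x}"
    by (rule vec.span_minimal[rotated]) (use S vec.span_base in \<open>auto simp: TIs_def\<close>)
  show "TIs (vec.span S)" unfolding TIs_def using 2 3 by auto
qed

lemma TIs_insert: "TIs (vec.span (insert v S)) \<longleftrightarrow> TIs S \<and> sing v \<and> v \<in> perp B S"
proof -
  have "TIs (vec.span (insert v S)) = TIs (insert v S)" by (rule TIs_span)
  then show ?thesis unfolding TIs_def perp_def using sing_B B_refl by auto
qed

lemma TIs_subset: "TIs T \<Longrightarrow> S \<subseteq> T \<Longrightarrow> TIs S"
  unfolding TIs_def by blast

end

lemma card_span_insert:
  fixes S :: "('a::{finite,field}^'n) set"
  assumes "x \<notin> vec.span S"
  shows "card (vec.span (insert x S)) = CARD('a) * card (vec.span S)"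
proof -
  have eq: "vec.span (insert x S) = (\<lambda>(k, y). k *s x + y) ` (UNIV \<times> vec.span S)"
  proof
    show "vec.span (insert x S) \<subseteq> (\<lambda>(k, y). k *s x + y) ` (UNIV \<times> vec.span S)"
    proof
      fix z assume "z \<in> vec.span (insert x S)"
      then obtain k where "z - k *s x \<in> vec.span S" by (auto simp: vec.span_insert)
      then show "z \<in> (\<lambda>(k, y). k *s x + y) ` (UNIV \<times> vec.span S)"
        by (intro image_eqI[of _ _ "(k, z - k *s x)"]) auto
    qed
    show "(\<lambda>(k, y). k *s x + y) ` (UNIV \<times> vec.span S) \<subseteq> vec.span (insert x S)"
    proof clarsimp
      fix k y assume "y \<in> vec.span S"
      then show "k *s x + y \<in> vec.span (insert x S)"
        unfolding vec.span_insert by (intro CollectI exI[of _ k]) simp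
    qed
  qed
  have inj: "inj_on (\<lambda>(k, y). k *s x + y) (UNIV \<times> vec.span S)"
  proof (rule inj_onI, clarsimp)
    fix k y k' y'
    assume y: "y \<in> vec.span S" and y': "y' \<in> vec.span S" and e: "k *s x + y = k' *s x + y'"
    show "k = k' \<and> y = y'"
    proof (cases "k = k'")
      case True then show ?thesis using e by simp
    next
      case False
      have "(k - k') *s x = y' - y" using e by (simp add: algebra_simps vector_sub_rdistrib)
      then have "x = inverse (k - k') *s (y' - y)" using False
        by (metis eq_iff_diff_eq_0 left_inverse vector_smult_assoc vector_smult_lid)
      then have "x \<in> vec.span S" using y y' by (simp add: vec.span_diff vec.span_scale)
      with assms show ?thesis by simp
    qed
  qed
  have "card (vec.span (insert x S)) = card ((UNIV::'a set) \<times> vec.span S)"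
    unfolding eq using card_image[OF inj] .
  also have "\<dots> = CARD('a) * card (vec.span S)" by (simp add: card_cartesian_product)
  finally show ?thesis .
qed

lemma card_span:
  fixes S :: "('a::{finite,field}^'n) set"
  shows "card (vec.span S) = CARD('a) ^ vec.dim S"
proof -
  have "finite S" by simp
  then show ?thesis
  proof (induction S rule: finite_induct)
    case empty then show ?case by simp
  next
    case (insert x S)
    show ?case
    proof (cases "x \<in> vec.span S")
      case True
      then have "vec.span (insert x S) = vec.span S" by (simp add: vec.span_redundant)
      then show ?thesis using insert True by (simp add: vec.dim_insert)
    next
      case False
      then show ?thesis using insert card_span_insert[OF False] by (simp add: vec.dim_insert)
    qed
  qed
qed

lemma card_subspace:
  fixes U :: "('a::{finite,field}^'n) set"
  assumes "vec.subspace U" shows "card U = CARD('a) ^ vec.dim U"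
  proof -
  have "vec.span U = U" using assms vec.span_eq_iff by blast
  then show ?thesis using card_span[of U] by (simp del: vec.span_eq_iff)
qed



lemma span_subspace: "vec.subspace S \<Longrightarrow> vec.span S = S"
  using vec.span_eq_iff by blast

context psp begin

lemma B_diff: "B (x - y) c = B x c - B y c"
  using B_add[of "x - y" y c] by (simp add: algebra_simps)

lemma dim_ker_B:
  assumes W: "vec.subspace W"
  shows "vec.dim W \<le> vec.dim (W \<inter> {x. B x c = 0}) + 1"
proof (cases "W \<subseteq> {x. B x c = 0}")
  case True
  then have "W \<inter> {x. B x c = 0} = W" by blast
  then show ?thesis by simp
next
  case False
  then obtain w where w: "w \<in> W" "B w c \<noteq> 0" by blast
  define K where "K = W \<inter> {x. B x c = 0}"
  have "W \<subseteq> vec.span (insert w K)"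
  proof
    fix x assume x: "x \<in> W"
    define t where "t = B x c / B w c"
    have "x - t *s w \<in> K"
      unfolding K_def using x w W
      by (auto simp: B_diff B_scale t_def vec.subspace_diff vec.subspace_scale)
    then have "x - t *s w \<in> vec.span (insert w K)"
      by (meson subsetD subset_insertI vec.span_superset)
    moreover have "t *s w \<in> vec.span (insert w K)"
      by (simp add: vec.span_base vec.span_scale)
    ultimately have "(x - t *s w) + t *s w \<in> vec.span (insert w K)"
      by (rule vec.span_add)
    then show "x \<in> vec.span (insert w K)" by simp
  qed
  then have "vec.dim W \<le> vec.dim (vec.span (insert w K))" by (rule vec.dim_subset)
  also have "\<dots> \<le> vec.dim K + 1" by (simp add: vec.dim_insert)
  finally show ?thesis unfolding K_def .
qed

lemma dim_ker_set:
  assumes W: "vec.subspace W" and C: "finite C"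
  shows "vec.dim W \<le> vec.dim (W \<inter> {x. \<forall>c\<in>C. B x c = 0}) + card C"
  using C
proof (induction C rule: finite_induct)
  case empty
  then show ?case by simp
next
  case (insert a C)
  let ?K = "W \<inter> {x. \<forall>c\<in>C. B x c = 0}"
  have sub: "vec.subspace ?K" using W ker_subspace_set vec.subspace_inter by blast
  have eq: "W \<inter> {x. \<forall>c\<in>insert a C. B x c = 0} = ?K \<inter> {x. B x a = 0}" by auto
  have "vec.dim ?K \<le> vec.dim (?K \<inter> {x. B x a = 0}) + 1" by (rule dim_ker_B[OF sub])
  then show ?case using insert eq by simp
qed

end

locale psp_r = psp +
  fixes r :: nat
  assumes rank: "polar_rank TIs r"
begin

abbreviation "gen \<equiv> k_spaces TIs r"

lemma gen_D: "M \<in> gen \<Longrightarrow> vec.subspace M \<and> vec.dim M = r \<and> TIs M"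
  by (simp add: k_spaces_def)

lemma rank_le: "vec.subspace U \<Longrightarrow> TIs U \<Longrightarrow> vec.dim U \<le> r"
  using rank unfolding polar_rank_def by blast

lemma gen_ex: "\<exists>G. G \<in> gen"
  using rank unfolding polar_rank_def by blast

lemma extend1:
  assumes M: "vec.subspace M" "TIs M" "vec.dim M < r"
  shows "\<exists>x. x \<notin> M \<and> sing x \<and> x \<in> perp B M"
proof -
  obtain G where G: "G \<in> gen" using gen_ex by blast
  then have Gs: "vec.subspace G" "vec.dim G = r" "TIs G" by (auto simp: k_spaces_def)
  define D where "D = G \<inter> M"
  have Ds: "vec.subspace D" unfolding D_def using Gs M vec.subspace_inter by blast
  obtain BD where BD: "BD \<subseteq> D" "vec.independent BD" "D \<subseteq> vec.span BD" "card BD = vec.dim D"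
    using vec.basis_exists by blast
  have "BD \<subseteq> M" using BD D_def by blast
  then obtain BM where BM: "BD \<subseteq> BM" "BM \<subseteq> M" "vec.independent BM" "M \<subseteq> vec.span BM"
    using vec.maximal_independent_subset_extend BD(2) by metis
  have spanBM: "vec.span BM = M"
    using BM M(1) by (metis subset_antisym vec.span_eq_iff vec.span_mono)
  have cardBM: "card BM = vec.dim M"
    using BM(3) spanBM by (metis vec.dim_span vec.dim_eq_card_independent)
  define C where "C = BM - BD"
  have finC: "finite C" by simp
  have cardC: "card C = vec.dim M - vec.dim D"
    unfolding C_def using BM(1) BD(4) cardBM by (simp add: card_Diff_subset)
  define K where "K = G \<inter> {x. \<forall>c\<in>C. B x c = 0}"
  have dimK: "vec.dim G \<le> vec.dim K + card C" unfolding K_def by (rule dim_ker_set[OF Gs(1) finC])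
  have dDM: "vec.dim D \<le> vec.dim M" using D_def vec.dim_subset by (metis inf_le2)
  have dimK2: "vec.dim K > vec.dim D" using dimK cardC Gs(2) M(3) dDM by linarith
  have Kperp: "K \<subseteq> perp B M"
  proof
    fix x assume x: "x \<in> K"
    have "BM \<subseteq> {s. B x s = 0}"
    proof
      fix b assume b: "b \<in> BM"
      show "b \<in> {s. B x s = 0}"
      proof (cases "b \<in> BD")
        case True
        then have "b \<in> G" using BD(1) D_def by blast
        then show ?thesis using x Gs(3) K_def TIs_def by auto
      next
        case False
        then show ?thesis using b x K_def C_def by auto
      qed
    qed
    moreover have "vec.subspace {s. B x s = 0}"
      using ker_subspace[of x] B_refl by (simp add: B_refl[of x])
    ultimately have "vec.span BM \<subseteq> {s. B x s = 0}" by (rule vec.span_minimal)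
    then show "x \<in> perp B M" using spanBM perp_alt by auto
  qed
  have "\<not> K \<subseteq> M"
  proof
    assume "K \<subseteq> M"
    then have "K \<subseteq> D" unfolding D_def K_def by blast
    then have "vec.dim K \<le> vec.dim D" by (rule vec.dim_subset)
    with dimK2 show False by simp
  qed
  then obtain x where x: "x \<in> K" "x \<notin> M" by blast
  have "sing x" using x Gs(3) K_def TIs_def by auto
  then show ?thesis using x Kperp by blast
qed

lemma exists_gen:
  assumes "vec.subspace Y" "TIs Y"
  shows "\<exists>M\<in>gen. Y \<subseteq> M"
  using assms
proof (induction "r - vec.dim Y" arbitrary: Y rule: less_induct)
  case less
  have le: "vec.dim Y \<le> r" using rank_le less.prems by blast
  show ?case
  proof (cases "vec.dim Y = r")
    case True
    then show ?thesis using less.prems by (auto simp: k_spaces_def)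
  next
    case False
    then obtain x where x: "x \<notin> Y" "sing x" "x \<in> perp B Y"
      using extend1 less.prems le by fastforce
    define Y' where "Y' = vec.span (insert x Y)"
    have s: "vec.subspace Y'" unfolding Y'_def by simp
    have t: "TIs Y'" unfolding Y'_def using TIs_insert x less.prems by blast
    have "x \<notin> vec.span Y" using x less.prems by (simp add: span_subspace)
    then have d: "vec.dim Y' = vec.dim Y + 1" unfolding Y'_def by (simp add: vec.dim_insert)
    have "Y \<subseteq> Y'" unfolding Y'_def by (meson subset_insertI vec.span_superset subset_trans)
    moreover obtain M where "M \<in> gen" "Y' \<subseteq> M"
      using less.hyps[of Y'] s t d le False by force
    ultimately show ?thesis by blast
  qed
qed

lemma gen_perp:
  assumes M: "M \<in> gen" and x: "sing x" "x \<in> perp B M"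
  shows "x \<in> M"
proof (rule ccontr)
  assume nx: "x \<notin> M"
  have Ms: "vec.subspace M" "vec.dim M = r" "TIs M" using M by (auto simp: k_spaces_def)
  have "TIs (vec.span (insert x M))" using TIs_insert x Ms by blast
  moreover have "x \<notin> vec.span M" using nx Ms by (simp add: span_subspace)
  then have "vec.dim (vec.span (insert x M)) = r + 1" using Ms by (simp add: vec.dim_insert)
  ultimately show False using rank_le[of "vec.span (insert x M)"] by simp
qed

end


primrec ext :: "('a::field^'n) set \<Rightarrow> ('a^'n) list \<Rightarrow> bool" where
  "ext Y [] = True"
| "ext Y (v # vs) = (ext Y vs \<and> v \<notin> vec.span (Y \<union> set vs))"

lemma dim_ext: "ext Y vs \<Longrightarrow> vec.dim (Y \<union> set vs) = vec.dim Y + length vs"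
proof (induction vs)
  case Nil then show ?case by simp
next
  case (Cons v vs)
  have "Y \<union> set (v # vs) = insert v (Y \<union> set vs)" by auto
  then show ?case using Cons by (simp add: vec.dim_insert)
qed

definition Eset :: "('a::field^'n) set \<Rightarrow> ('a^'n) set \<Rightarrow> nat \<Rightarrow> ('a^'n) list set" where
  "Eset Y W t = {vs. length vs = t \<and> set vs \<subseteq> W \<and> ext Y vs}"

lemma finite_lists_fin: "finite {vs :: ('b::finite) list. length vs = t}"
  using finite_lists_length_eq[of "UNIV :: 'b set" t] by simp

lemma finite_list_set: "finite (A :: ('b::finite) list set) \<longleftrightarrow> (\<exists>t. \<forall>vs\<in>A. length vs \<le> t)"
proof
  assume "finite A"
  then show "\<exists>t. \<forall>vs\<in>A. length vs \<le> t"
    by (intro exI[of _ "Max (length ` A)"]) auto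
next
  assume "\<exists>t. \<forall>vs\<in>A. length vs \<le> t"
  then obtain t where t: "\<forall>vs\<in>A. length vs \<le> t" by blast
  have "A \<subseteq> (\<Union>i\<le>t. {vs. length vs = i})" using t by auto
  moreover have "finite (\<Union>i\<le>t. {vs :: 'b list. length vs = i})"
    using finite_lists_fin by blast
  ultimately show "finite A" by (rule finite_subset)
qed

lemma finite_lists_len: "(\<And>vs. vs \<in> A \<Longrightarrow> length vs = t) \<Longrightarrow> finite (A :: ('b::finite) list set)"
  using finite_list_set[of A] by auto


lemma card_cons_family:
  fixes A :: "('b::finite) list set"
  assumes fA: "finite A"
  shows "card (\<Union>vs\<in>A. (\<lambda>v. v # vs) ` X vs) = (\<Sum>vs\<in>A. card (X vs))"
proof -
  have "card (\<Union>vs\<in>A. (\<lambda>v. v # vs) ` X vs) = (\<Sum>vs\<in>A. card ((\<lambda>v. v # vs) ` X vs))"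
    by (rule card_UN_disjoint) (use fA in auto)
  also have "\<dots> = (\<Sum>vs\<in>A. card (X vs))"
    by (rule sum.cong) (auto intro: card_image inj_onI)
  finally show ?thesis .
qed

lemma card_fibers:
  assumes "finite C" "finite A" "\<And>a. a \<in> A \<Longrightarrow> f a \<in> C"
  shows "card A = (\<Sum>c\<in>C. card {a\<in>A. f a = c})"
proof -
  have "A = (\<Union>c\<in>C. {a\<in>A. f a = c})" using assms(3) by auto
  then have "card A = card (\<Union>c\<in>C. {a\<in>A. f a = c})" by simp
  also have "\<dots> = (\<Sum>c\<in>C. card {a\<in>A. f a = c})"
    by (rule card_UN_disjoint) (use assms in auto)
  finally show ?thesis .
qed

lemma Eset_Suc:
  "Eset Y W (Suc t) = (\<Union>vs\<in>Eset Y W t. (\<lambda>v. v # vs) ` (W - vec.span (Y \<union> set vs)))"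
proof
  show "Eset Y W (Suc t) \<subseteq> (\<Union>vs\<in>Eset Y W t. (\<lambda>v. v # vs) ` (W - vec.span (Y \<union> set vs)))"
  proof
    fix ws assume "ws \<in> Eset Y W (Suc t)"
    then obtain v vs where "ws = v # vs" "length vs = t" "set (v # vs) \<subseteq> W" "ext Y (v # vs)"
      unfolding Eset_def by (cases ws) auto
    then show "ws \<in> (\<Union>vs\<in>Eset Y W t. (\<lambda>v. v # vs) ` (W - vec.span (Y \<union> set vs)))"
      unfolding Eset_def by auto
  qed
  show "(\<Union>vs\<in>Eset Y W t. (\<lambda>v. v # vs) ` (W - vec.span (Y \<union> set vs))) \<subseteq> Eset Y W (Suc t)"
    unfolding Eset_def by auto
qed

lemma card_Eset:
  fixes W Y :: "('a::{finite,field}^'n) set"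
  assumes W: "vec.subspace W" and Y: "Y \<subseteq> W" and d: "vec.dim Y + t \<le> vec.dim W"
  shows "card (Eset Y W t) = (\<Prod>i<t. CARD('a) ^ vec.dim W - CARD('a) ^ (vec.dim Y + i))"
  using d
proof (induction t)
  case 0
  have "Eset Y W 0 = {[]}" unfolding Eset_def by auto
  then show ?case by simp
next
  case (Suc t)
  have fin: "finite (Eset Y W t)" by (rule finite_lists_len) (auto simp: Eset_def)
  have c: "card (W - vec.span (Y \<union> set vs)) = CARD('a) ^ vec.dim W - CARD('a) ^ (vec.dim Y + t)"
    if vs: "vs \<in> Eset Y W t" for vs
  proof -
    have sub: "vec.span (Y \<union> set vs) \<subseteq> W"
    proof (rule vec.span_minimal[OF _ W])
      show "Y \<union> set vs \<subseteq> W" using vs Y unfolding Eset_def by auto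
    qed
    have "card (W - vec.span (Y \<union> set vs)) = card W - card (vec.span (Y \<union> set vs))"
      by (rule card_Diff_subset) (use sub in auto)
    also have "\<dots> = CARD('a) ^ vec.dim W - CARD('a) ^ (vec.dim Y + t)"
      using card_subspace[OF W] card_span[of "Y \<union> set vs"] dim_ext[of Y vs] vs
      unfolding Eset_def by simp
    finally show ?thesis .
  qed
  have "card (Eset Y W (Suc t)) = (\<Sum>vs\<in>Eset Y W t. card (W - vec.span (Y \<union> set vs)))"
    unfolding Eset_Suc by (rule card_cons_family[OF fin])
  also have "\<dots> = card (Eset Y W t) * (CARD('a) ^ vec.dim W - CARD('a) ^ (vec.dim Y + t))"
    using c by simp
  also have "\<dots> = (\<Prod>i<Suc t. CARD('a) ^ vec.dim W - CARD('a) ^ (vec.dim Y + i))"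
    using Suc by simp
  finally show ?case .
qed

lemma prod_identity:
  fixes q :: real
  assumes "j + t < r"
  shows "(\<Prod>i<t. q ^ r - q ^ (j + i)) * (q ^ (r - j - t) - 1)
       = (q ^ (r - j) - 1) * (\<Prod>i<t. q ^ (r - 1) - q ^ (j + i))"
  using assms
proof (induction t)
  case 0 then show ?case by simp
next
  case (Suc t)
  define a where "a = q ^ (j + t)"
  define b where "b = q ^ (r - j - t - 1)"
  define d where "d = r - j - t - 1"
  have hd: "r - j - t = Suc d" unfolding d_def using Suc.prems by linarith
  have bd: "b = q ^ d" unfolding b_def d_def by simp
  have e1: "q ^ (r - j - t) = q * b" unfolding bd hd by simp
  have e2: "q ^ (r - 1) = a * b" unfolding a_def b_def using Suc.prems
    by (simp add: power_add[symmetric])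
  have hr: "r = Suc (r - 1)" using Suc.prems by linarith
  have e3: "q ^ r = q * (a * b)" using e2 power_Suc[of q "r - 1"] hr by simp
  have e4: "q ^ (r - j - Suc t) = b" unfolding b_def by simp
  have IH: "(\<Prod>i<t. q ^ r - q ^ (j + i)) * (q ^ (r - j - t) - 1)
       = (q ^ (r - j) - 1) * (\<Prod>i<t. q ^ (r - 1) - q ^ (j + i))" using Suc by simp
  have "(\<Prod>i<Suc t. q ^ r - q ^ (j + i)) * (q ^ (r - j - Suc t) - 1)
      = (\<Prod>i<t. q ^ r - q ^ (j + i)) * ((q ^ r - a) * (b - 1))"
    by (simp only: prod.lessThan_Suc e4 a_def mult.assoc)
  also have "(q ^ r - a) * (b - 1) = (q ^ (r - j - t) - 1) * (q ^ (r - 1) - a)"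
    unfolding e1 e2 e3 by (simp add: algebra_simps)
  also have "(\<Prod>i<t. q ^ r - q ^ (j + i)) * ((q ^ (r - j - t) - 1) * (q ^ (r - 1) - a))
      = (q ^ (r - j) - 1) * (\<Prod>i<t. q ^ (r - 1) - q ^ (j + i)) * (q ^ (r - 1) - a)"
    using IH by (simp add: mult.assoc[symmetric])
  also have "\<dots> = (q ^ (r - j) - 1) * (\<Prod>i<Suc t. q ^ (r - 1) - q ^ (j + i))"
    by (simp only: prod.lessThan_Suc a_def mult.assoc)
  finally show ?case .
qed



lemma card_field_ge2: "CARD('a::{finite,field}) \<ge> 2"
proof -
  have "card {0::'a, 1} = 2" by simp
  moreover have "card {0::'a, 1} \<le> CARD('a)" by (rule card_mono) simp_all
  ultimately show ?thesis by simp
qed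

locale psp_re = psp_r +
  fixes e :: real
  assumes param: "polar_parameter TIs r e" and r1: "r \<ge> 1"
begin

definition SY where
  "SY Y = {x. sing x \<and> x \<in> perp B Y}"

definition Hyp where
  "Hyp M Y = {L \<in> k_spaces TIs (r - 1). Y \<subseteq> L \<and> L \<subseteq> M}"

definition GL where
  "GL M L = {G \<in> gen. L \<subseteq> G \<and> G \<noteq> M}"

lemma hyp_x:
  assumes M: "M \<in> gen" and x: "sing x" "x \<notin> M"
  shows "vec.subspace (M \<inter> {m. B m x = 0}) \<and> vec.dim (M \<inter> {m. B m x = 0}) = r - 1"
proof -
  have Ms: "vec.subspace M" "vec.dim M = r" "TIs M" using M by (auto simp: k_spaces_def)
  let ?L = "M \<inter> {m. B m x = 0}"
  have s: "vec.subspace ?L" using Ms ker_subspace vec.subspace_inter by blast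
  have d1: "vec.dim M \<le> vec.dim ?L + 1" by (rule dim_ker_B[OF Ms(1)])
  have "?L \<noteq> M"
  proof
    assume "?L = M"
    then have "x \<in> perp B M" unfolding perp_def by blast
    then show False using gen_perp[OF M x(1)] x(2) by blast
  qed
  then have "?L \<subset> M" by blast
  then have "vec.span ?L \<subset> vec.span M" using s Ms(1) by (simp add: span_subspace)
  then have "vec.dim ?L < vec.dim M" by (rule vec.dim_psubset)
  then show ?thesis using s d1 Ms(2) by simp
qed

lemma uniq:
  assumes M: "M \<in> gen" and L: "vec.subspace L" "vec.dim L = r - 1" "L \<subseteq> M"
    and G: "G \<in> gen" "L \<subseteq> G" "G \<noteq> M" and x: "x \<in> G" "x \<notin> L"
  shows "x \<notin> M \<and> L = M \<inter> {m. B m x = 0} \<and> G = vec.span (insert x L)"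
proof -
  have Ms: "vec.subspace M" "vec.dim M = r" "TIs M" using M by (auto simp: k_spaces_def)
  have Gs: "vec.subspace G" "vec.dim G = r" "TIs G" using G by (auto simp: k_spaces_def)
  let ?S = "vec.span (insert x L)"
  have xL: "x \<notin> vec.span L" using x L by (simp add: span_subspace)
  have dS: "vec.dim ?S = r" using xL L r1 by (simp add: vec.dim_insert)
  have SG: "?S \<subseteq> G" using G x Gs(1) by (intro vec.span_minimal) auto
  have SGe: "?S = G" by (rule vec.subspace_dim_equal) (use SG dS Gs in auto)
  have xM: "x \<notin> M"
  proof
    assume "x \<in> M"
    then have "?S \<subseteq> M" using L Ms(1) by (intro vec.span_minimal) auto
    then have "?S = M" by (intro vec.subspace_dim_equal) (use dS Ms in auto)
    with SGe G show False by simp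
  qed
  have sx: "sing x" using x Gs(3) unfolding TIs_def by blast
  have LLx: "L \<subseteq> M \<inter> {m. B m x = 0}" using L G x Gs(3) unfolding TIs_def by blast
  have hx: "vec.subspace (M \<inter> {m. B m x = 0}) \<and> vec.dim (M \<inter> {m. B m x = 0}) = r - 1"
    by (rule hyp_x[OF M sx xM])
  have "L = M \<inter> {m. B m x = 0}"
    by (rule vec.subspace_dim_equal) (use L LLx hx in auto)
  then show ?thesis using xM SGe by simp
qed

end

context psp_re begin
lemma SY_decomp:
  assumes M: "M \<in> gen" and Y: "Y \<subseteq> M"
  shows "SY Y = M \<union> (\<Union>p\<in>Sigma (Hyp M Y) (GL M). snd p - fst p)"
proof
  have Ms: "vec.subspace M" "vec.dim M = r" "TIs M" using M by (auto simp: k_spaces_def)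
  show "SY Y \<subseteq> M \<union> (\<Union>p\<in>Sigma (Hyp M Y) (GL M). snd p - fst p)"
  proof
    fix x assume xS: "x \<in> SY Y"
    show "x \<in> M \<union> (\<Union>p\<in>Sigma (Hyp M Y) (GL M). snd p - fst p)"
    proof (cases "x \<in> M")
      case True then show ?thesis by blast
    next
      case False
      have sx: "sing x" and px: "x \<in> perp B Y" using xS by (auto simp: SY_def)
      define Lx where "Lx = M \<inter> {m. B m x = 0}"
      have hx: "vec.subspace Lx" "vec.dim Lx = r - 1" using hyp_x[OF M sx False] Lx_def by auto
      have YL: "Y \<subseteq> Lx" using Y px unfolding Lx_def perp_def by blast
      have TL: "TIs Lx" using Ms(3) TIs_subset Lx_def by blast
      have LH: "Lx \<in> Hyp M Y" unfolding Hyp_def k_spaces_def using hx YL Lx_def TL by blast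
      define G where "G = vec.span (insert x Lx)"
      have xp: "x \<in> perp B Lx" unfolding perp_def Lx_def by blast
      have TG: "TIs G" unfolding G_def using TIs_insert TL sx xp by blast
      have xL: "x \<notin> vec.span Lx" using False hx(1) Lx_def by (simp add: span_subspace)
      have dG: "vec.dim G = r" unfolding G_def using xL hx r1 by (simp add: vec.dim_insert)
      have Gg: "G \<in> gen" unfolding k_spaces_def using TG dG G_def by simp
      have xG: "x \<in> G" unfolding G_def by (simp add: vec.span_base)
      have LG: "Lx \<subseteq> G" unfolding G_def by (meson subset_insertI vec.span_superset subset_trans)
      have "G \<noteq> M" using xG False by blast
      then have "G \<in> GL M Lx" unfolding GL_def using Gg LG by blast
      then have "(Lx, G) \<in> Sigma (Hyp M Y) (GL M)" using LH by blast
      moreover have "x \<in> G - Lx" using xG False Lx_def by blast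
      ultimately show ?thesis by (intro UnI2 UN_I[of "(Lx, G)"]) auto
    qed
  qed
  show "M \<union> (\<Union>p\<in>Sigma (Hyp M Y) (GL M). snd p - fst p) \<subseteq> SY Y"
  proof
    fix x assume x: "x \<in> M \<union> (\<Union>p\<in>Sigma (Hyp M Y) (GL M). snd p - fst p)"
    then show "x \<in> SY Y"
    proof
      assume "x \<in> M"
      then have "sing x" "\<forall>s\<in>Y. B s x = 0" using Ms(3) Y unfolding TIs_def by auto
      then show ?thesis unfolding SY_def perp_def by simp
    next
      assume "x \<in> (\<Union>p\<in>Sigma (Hyp M Y) (GL M). snd p - fst p)"
      then obtain p where p: "p \<in> Sigma (Hyp M Y) (GL M)" "x \<in> snd p - fst p" by blast
      obtain L G where LG: "p = (L, G)" by (cases p)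
      have LG2: "L \<in> Hyp M Y" "G \<in> GL M L" "x \<in> G" using p LG by auto
      then have "TIs G" "Y \<subseteq> G" unfolding GL_def Hyp_def k_spaces_def by auto
      then have "sing x" "\<forall>s\<in>Y. B s x = 0" using LG2(3) unfolding TIs_def by auto
      then show ?thesis unfolding SY_def perp_def by simp
    qed
  qed
qed

end

context psp_re begin
lemma card_GL:
  assumes M: "M \<in> gen" and L: "L \<in> Hyp M Y"
  shows "real (card (GL M L)) = real CARD('a) powr e"
proof -
  have Ms: "vec.subspace M" "vec.dim M = r" "TIs M" using M by (auto simp: k_spaces_def)
  have "L \<in> k_spaces TIs (r - 1)"
    using L unfolding Hyp_def by blast
  then have c: "real (card {G \<in> gen. L \<subseteq> G}) = real CARD('a) powr e + 1"
    using param unfolding polar_parameter_def by blast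
  have "GL M L = {G \<in> gen. L \<subseteq> G} - {M}" unfolding GL_def by blast
  moreover have "M \<in> {G \<in> gen. L \<subseteq> G}" using M L unfolding Hyp_def by blast
  ultimately have "card (GL M L) = card {G \<in> gen. L \<subseteq> G} - 1" by simp
  moreover have "{G \<in> gen. L \<subseteq> G} \<noteq> {}" using \<open>M \<in> {G \<in> gen. L \<subseteq> G}\<close> by blast
  then have "card {G \<in> gen. L \<subseteq> G} \<ge> 1" by (simp add: card_gt_0_iff Suc_le_eq)
  ultimately show ?thesis using c by (simp add: of_nat_diff)
qed

lemma card_SY_Hyp:
  assumes M: "M \<in> gen" and Y: "Y \<subseteq> M"
  shows "real (card (SY Y)) = real CARD('a) ^ r
     + real (card (Hyp M Y)) * real CARD('a) powr e * (real CARD('a) ^ r - real CARD('a) ^ (r - 1))"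
proof -
  have Ms: "vec.subspace M" "vec.dim M = r" "TIs M" using M by (auto simp: k_spaces_def)
  let ?I = "Sigma (Hyp M Y) (GL M)"
  have disj: "M \<inter> (\<Union>p\<in>?I. snd p - fst p) = {}"
  proof -
    { fix x L G assume L: "L \<in> Hyp M Y" and G: "G \<in> GL M L" and x: "x \<in> G" "x \<notin> L"
      have "x \<notin> M" using uniq[OF M _ _ _ _ _ _ x] L G unfolding Hyp_def GL_def k_spaces_def by blast }
    then show ?thesis by force
  qed
  have disj2: "\<forall>p\<in>?I. \<forall>p'\<in>?I. p \<noteq> p' \<longrightarrow> (snd p - fst p) \<inter> (snd p' - fst p') = {}"
  proof (intro ballI impI)
    fix p p' assume p: "p \<in> ?I" and p': "p' \<in> ?I" and ne: "p \<noteq> p'"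
    obtain L G where pp: "p = (L, G)" by (cases p)
    obtain L' G' where pp': "p' = (L', G')" by (cases p')
    have L: "L \<in> Hyp M Y" and G: "G \<in> GL M L" using p pp by auto
    have L': "L' \<in> Hyp M Y" and G': "G' \<in> GL M L'" using p' pp' by auto
    show "(snd p - fst p) \<inter> (snd p' - fst p') = {}"
    proof (rule ccontr)
      assume "(snd p - fst p) \<inter> (snd p' - fst p') \<noteq> {}"
      then obtain x where x: "x \<in> G" "x \<notin> L" "x \<in> G'" "x \<notin> L'" using pp pp' by auto
      have u1: "x \<notin> M \<and> L = M \<inter> {m. B m x = 0} \<and> G = vec.span (insert x L)"
        using uniq[OF M _ _ _ _ _ _ x(1,2)] L G unfolding Hyp_def GL_def k_spaces_def by blast
      have u2: "x \<notin> M \<and> L' = M \<inter> {m. B m x = 0} \<and> G' = vec.span (insert x L')"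
        using uniq[OF M _ _ _ _ _ _ x(3,4)] L' G' unfolding Hyp_def GL_def k_spaces_def by blast
      show False using u1 u2 ne pp pp' by simp
    qed
  qed
  have cdiff: "card (snd p - fst p) = CARD('a) ^ r - CARD('a) ^ (r - 1)" if p: "p \<in> ?I" for p
  proof -
    obtain L G where pLG: "p = (L, G)" "L \<in> Hyp M Y" "G \<in> GL M L" using p by auto
    have Ls: "vec.subspace L" "vec.dim L = r - 1" "L \<subseteq> G" and Gs: "vec.subspace G" "vec.dim G = r"
      using pLG unfolding Hyp_def GL_def k_spaces_def by auto
    have "card (G - L) = card G - card L" by (rule card_Diff_subset) (use Ls in auto)
    then show ?thesis using pLG card_subspace[OF Ls(1)] card_subspace[OF Gs(1)] Ls Gs by simp
  qed
  have "card (SY Y) = card M + card (\<Union>p\<in>?I. snd p - fst p)"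
    unfolding SY_decomp[OF M Y] by (rule card_Un_disjoint) (use disj in auto)
  also have "card (\<Union>p\<in>?I. snd p - fst p) = (\<Sum>p\<in>?I. card (snd p - fst p))"
    by (rule card_UN_disjoint) (use disj2 in auto)
  also have "\<dots> = card ?I * (CARD('a) ^ r - CARD('a) ^ (r - 1))"
    using cdiff by simp
  also have "card ?I = (\<Sum>L\<in>Hyp M Y. card (GL M L))" by (rule card_SigmaI) auto
  finally have "real (card (SY Y)) = real (card M) + real (\<Sum>L\<in>Hyp M Y. card (GL M L))
      * real (CARD('a) ^ r - CARD('a) ^ (r - 1))" by simp
  also have "real (\<Sum>L\<in>Hyp M Y. card (GL M L)) = (\<Sum>L\<in>Hyp M Y. real CARD('a) powr e)"
    unfolding of_nat_sum using card_GL[OF M] by (intro sum.cong) auto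
  also have "\<dots> = real (card (Hyp M Y)) * real CARD('a) powr e" by simp
  also have "real (CARD('a) ^ r - CARD('a) ^ (r - 1)) = real CARD('a) ^ r - real CARD('a) ^ (r - 1)"
  proof -
    have "CARD('a) ^ (r - 1) \<le> CARD('a) ^ r"
      by (rule power_increasing) (use card_field_ge2[where 'a='a] in auto)
    then show ?thesis by (simp add: of_nat_diff)
  qed
  finally show ?thesis using card_subspace[OF Ms(1)] Ms(2) by simp
qed

end


lemma real_prod_diff:
  fixes q :: nat
  assumes "\<And>i. i < t \<Longrightarrow> f i \<le> g i"
  shows "real (\<Prod>i<t. g i - f i) = (\<Prod>i<t. real (g i) - real (f i))"
  unfolding of_nat_prod using assms by (intro prod.cong) (auto simp: of_nat_diff)

context psp_re begin

lemma card_Hyp: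
  assumes M: "M \<in> gen" and Ys: "vec.subspace Y" and Y: "Y \<subseteq> M"
  shows "real (card (Hyp M Y)) * (real CARD('a) - 1) = real CARD('a) ^ (r - vec.dim Y) - 1"
proof -
  have Ms: "vec.subspace M" "vec.dim M = r" "TIs M" using M by (auto simp: k_spaces_def)
  define j where "j = vec.dim Y"
  define q where "q = CARD('a)"
  have q2: "q \<ge> 2" unfolding q_def by (rule card_field_ge2)
  have jr: "j \<le> r" unfolding j_def using vec.dim_subset[OF Y] Ms(2) by simp
  show ?thesis
  proof (cases "j = r")
    case True
    have "Hyp M Y = {}"
    proof (rule ccontr)
      assume "Hyp M Y \<noteq> {}"
      then obtain L where L: "L \<in> Hyp M Y" by blast
      then have "Y \<subseteq> L" "vec.dim L = r - 1" unfolding Hyp_def k_spaces_def by auto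
      then have "j \<le> r - 1" unfolding j_def using vec.dim_subset by metis
      with True r1 show False by simp
    qed
    then show ?thesis using True j_def by simp
  next
    case False
    then have jr': "j < r" using jr by simp
    define t where "t = r - 1 - j"
    have jt: "j + t = r - 1" unfolding t_def using jr' by simp
    define E where "E = Eset Y M t"
    have cE: "card E = (\<Prod>i<t. q ^ r - q ^ (j + i))"
      unfolding E_def q_def j_def using card_Eset[OF Ms(1) Y, of t] Ms(2) jt j_def by simp
    have finE: "finite E" unfolding E_def by (rule finite_lists_len) (auto simp: Eset_def)
    have maps: "vec.span (Y \<union> set vs) \<in> Hyp M Y" if vs: "vs \<in> E" for vs
    proof -
      have v: "length vs = t" "set vs \<subseteq> M" "ext Y vs" using vs unfolding E_def Eset_def by auto
      have sub: "vec.span (Y \<union> set vs) \<subseteq> M"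
        by (rule vec.span_minimal[OF _ Ms(1)]) (use v Y in auto)
      have d: "vec.dim (vec.span (Y \<union> set vs)) = r - 1"
        using dim_ext[OF v(3)] v(1) jt j_def by simp
      have "TIs (vec.span (Y \<union> set vs))" using sub Ms(3) TIs_subset by blast
      moreover have "Y \<subseteq> vec.span (Y \<union> set vs)" by (meson Un_upper1 vec.span_superset subset_trans)
      ultimately show ?thesis unfolding Hyp_def k_spaces_def using sub d by simp
    qed
    have fib: "{vs \<in> E. vec.span (Y \<union> set vs) = L} = Eset Y L t" if L: "L \<in> Hyp M Y" for L
    proof
      have Ls: "vec.subspace L" "vec.dim L = r - 1" "Y \<subseteq> L" "L \<subseteq> M"
        using L unfolding Hyp_def k_spaces_def by auto
      show "{vs \<in> E. vec.span (Y \<union> set vs) = L} \<subseteq> Eset Y L t"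
      proof
        fix vs assume "vs \<in> {vs \<in> E. vec.span (Y \<union> set vs) = L}"
        then have vs: "vs \<in> E" and eq: "vec.span (Y \<union> set vs) = L" by auto
        have "set vs \<subseteq> L" using eq by (metis Un_upper2 vec.span_superset subset_trans)
        then show "vs \<in> Eset Y L t" using vs unfolding E_def Eset_def by auto
      qed
      show "Eset Y L t \<subseteq> {vs \<in> E. vec.span (Y \<union> set vs) = L}"
      proof
        fix vs assume vs: "vs \<in> Eset Y L t"
        have v: "length vs = t" "set vs \<subseteq> L" "ext Y vs" using vs unfolding Eset_def by auto
        have "vs \<in> E" using v Ls unfolding E_def Eset_def by auto
        moreover have "vec.span (Y \<union> set vs) = L"
        proof (rule vec.subspace_dim_equal)
          show "vec.span (Y \<union> set vs) \<subseteq> L"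
            by (rule vec.span_minimal[OF _ Ls(1)]) (use v Ls in auto)
          show "vec.dim L \<le> vec.dim (vec.span (Y \<union> set vs))"
            using dim_ext[OF v(3)] v(1) jt j_def Ls(2) by simp
        qed (use Ls in auto)
        ultimately show "vs \<in> {vs \<in> E. vec.span (Y \<union> set vs) = L}" by simp
      qed
    qed
    have cL: "card (Eset Y L t) = (\<Prod>i<t. q ^ (r - 1) - q ^ (j + i))" if L: "L \<in> Hyp M Y" for L
    proof -
      have Ls: "vec.subspace L" "vec.dim L = r - 1" "Y \<subseteq> L"
        using L unfolding Hyp_def k_spaces_def by auto
      show ?thesis using card_Eset[OF Ls(1) Ls(3), of t] Ls(2) jt j_def q_def by simp
    qed
    have "card E = (\<Sum>L\<in>Hyp M Y. card {vs \<in> E. vec.span (Y \<union> set vs) = L})"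
      by (rule card_fibers) (use finE maps in auto)
    also have "\<dots> = (\<Sum>L\<in>Hyp M Y. (\<Prod>i<t. q ^ (r - 1) - q ^ (j + i)))"
      by (rule sum.cong) (use fib cL in auto)
    finally have eq: "(\<Prod>i<t. q ^ r - q ^ (j + i)) = card (Hyp M Y) * (\<Prod>i<t. q ^ (r - 1) - q ^ (j + i))"
      using cE by simp
    have mono1: "q ^ (j + i) \<le> q ^ r" if "i < t" for i
      by (rule power_increasing) (use that jt q2 in auto)
    have mono2: "q ^ (j + i) \<le> q ^ (r - 1)" if "i < t" for i
      by (rule power_increasing) (use that jt q2 in auto)
    define P where "P = (\<Prod>i<t. real q ^ (r - 1) - real q ^ (j + i))"
    have P0: "P > 0" unfolding P_def
    proof (rule prod_pos)
      fix i assume "i \<in> {..<t}"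
      then have "j + i < r - 1" using jt by simp
      then have "real q ^ (j + i) < real q ^ (r - 1)"
        by (rule power_strict_increasing) (use q2 in auto)
      then show "0 < real q ^ (r - 1) - real q ^ (j + i)" by simp
    qed
    have eqR: "(\<Prod>i<t. real q ^ r - real q ^ (j + i)) = real (card (Hyp M Y)) * P"
    proof -
      have "real (\<Prod>i<t. q ^ r - q ^ (j + i)) = real (card (Hyp M Y) * (\<Prod>i<t. q ^ (r - 1) - q ^ (j + i)))"
        using eq by simp
      then show ?thesis unfolding P_def of_nat_mult
        using real_prod_diff[of t "\<lambda>i. q ^ (j + i)" "\<lambda>i. q ^ r", OF mono1]
          real_prod_diff[of t "\<lambda>i. q ^ (j + i)" "\<lambda>i. q ^ (r - 1)", OF mono2] by simp
    qed
    have rjt: "r - j - t = 1" using jt jr' by simp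
    have pid: "(\<Prod>i<t. real q ^ r - real q ^ (j + i)) * (real q ^ (r - j - t) - 1)
       = (real q ^ (r - j) - 1) * P"
      unfolding P_def by (rule prod_identity) (use jt jr' in simp)
    then have "real (card (Hyp M Y)) * (real q - 1) * P = (real q ^ (r - j) - 1) * P"
      unfolding eqR rjt by (simp add: algebra_simps)
    then have "real (card (Hyp M Y)) * (real q - 1) = real q ^ (r - j) - 1" using P0 by simp
    then show ?thesis unfolding q_def j_def .
  qed
qed

lemma card_SY:
  assumes Ys: "vec.subspace Y" and T: "TIs Y"
  shows "real (card (SY Y)) = real CARD('a) ^ r
     + real CARD('a) powr e * real CARD('a) ^ (r - 1) * (real CARD('a) ^ (r - vec.dim Y) - 1)"
proof -
  obtain M where M: "M \<in> gen" "Y \<subseteq> M" using exists_gen[OF Ys T] by blast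
  have h: "real (card (Hyp M Y)) * (real CARD('a) - 1) = real CARD('a) ^ (r - vec.dim Y) - 1"
    by (rule card_Hyp[OF M(1) Ys M(2)])
  have "real CARD('a) ^ r = real CARD('a) * real CARD('a) ^ (r - 1)"
    using r1 by (metis Suc_diff_1 less_le_trans zero_less_one power_Suc)
  then have p: "real CARD('a) ^ r - real CARD('a) ^ (r - 1) = (real CARD('a) - 1) * real CARD('a) ^ (r - 1)"
    by (simp add: algebra_simps)
  have "real (card (SY Y)) = real CARD('a) ^ r + real (card (Hyp M Y)) * real CARD('a) powr e
      * ((real CARD('a) - 1) * real CARD('a) ^ (r - 1))"
    using card_SY_Hyp[OF M] p by simp
  also have "\<dots> = real CARD('a) ^ r + real CARD('a) powr e * real CARD('a) ^ (r - 1)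
      * (real (card (Hyp M Y)) * (real CARD('a) - 1))"
    by (simp only: mult_ac)
  also have "\<dots> = real CARD('a) ^ r
     + real CARD('a) powr e * real CARD('a) ^ (r - 1) * (real CARD('a) ^ (r - vec.dim Y) - 1)"
    using h by simp
  finally show ?thesis .
qed

end


lemma cons_set_eq:
  assumes "\<And>ws. ws \<in> S \<Longrightarrow> ws \<noteq> []"
    and "\<And>v vs. v # vs \<in> S \<longleftrightarrow> vs \<in> T \<and> v \<in> X vs"
  shows "S = (\<Union>vs\<in>T. (\<lambda>v. v # vs) ` X vs)"
proof
  show "S \<subseteq> (\<Union>vs\<in>T. (\<lambda>v. v # vs) ` X vs)"
  proof
    fix ws assume ws: "ws \<in> S"
    then obtain v vs where "ws = v # vs" using assms(1) by (cases ws) auto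
    then show "ws \<in> (\<Union>vs\<in>T. (\<lambda>v. v # vs) ` X vs)" using ws assms(2) by auto
  qed
  show "(\<Union>vs\<in>T. (\<lambda>v. v # vs) ` X vs) \<subseteq> S" using assms(2) by auto
qed

lemma dim_ext0: "ext {} vs \<Longrightarrow> vec.dim (set vs) = length vs"
  using dim_ext[of "{}" vs] by simp

context psp begin
lemma TIs_insert': "TIs (insert v S) \<longleftrightarrow> TIs S \<and> sing v \<and> v \<in> perp B S"
  using TIs_insert[of v S] TIs_span[of "insert v S"] by simp
end

context psp_re begin

definition Seq :: "nat \<Rightarrow> ('a^'b) list set" where
  "Seq i = {vs. length vs = i \<and> ext {} vs \<and> TIs (vec.span (set vs))}"

lemma Seq_cons: "v # vs \<in> Seq (Suc i) \<longleftrightarrow> vs \<in> Seq i \<and> v \<in> SY (vec.span (set vs)) - vec.span (set vs)"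
  by (auto simp: Seq_def SY_def TIs_insert' TIs_span perp_span)

lemma Seq_nonempty: "ws \<in> Seq (Suc i) \<Longrightarrow> ws \<noteq> []"
  by (auto simp: Seq_def)

lemma Seq_fin: "finite (Seq i)"
  by (rule finite_lists_len) (auto simp: Seq_def)

lemma Seq_dim: "vs \<in> Seq i \<Longrightarrow> vec.dim (vec.span (set vs)) = i"
  using dim_ext[of "{}" vs] by (auto simp: Seq_def)

lemma span_in_SY: "TIs U \<Longrightarrow> vec.subspace U \<Longrightarrow> U \<subseteq> SY U"
  unfolding SY_def TIs_def perp_def by auto

lemma card_X1:
  assumes vs: "vs \<in> Seq i"
  shows "real (card (SY (vec.span (set vs)) - vec.span (set vs)))
    = real CARD('a) ^ r + real CARD('a) powr e * real CARD('a) ^ (r - 1) * (real CARD('a) ^ (r - i) - 1)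
      - real CARD('a) ^ i"
proof -
  let ?U = "vec.span (set vs)"
  have T: "TIs ?U" using vs by (simp add: Seq_def)
  have sub: "?U \<subseteq> SY ?U" by (rule span_in_SY[OF T]) simp
  have "card (SY ?U - ?U) = card (SY ?U) - card ?U" by (rule card_Diff_subset) (use sub in auto)
  moreover have "card ?U \<le> card (SY ?U)" by (rule card_mono) (use sub in auto)
  ultimately have "real (card (SY ?U - ?U)) = real (card (SY ?U)) - real (card ?U)" by (simp add: of_nat_diff)
  moreover have "card ?U = CARD('a) ^ i" using card_span[of "set vs"] Seq_dim[OF vs] by simp
  ultimately show ?thesis using card_SY[of ?U] T Seq_dim[OF vs] by simp
qed

lemma card_Seq_Suc:
  "real (card (Seq (Suc i))) = real (card (Seq i)) *
     (real CARD('a) ^ r + real CARD('a) powr e * real CARD('a) ^ (r - 1) * (real CARD('a) ^ (r - i) - 1)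
      - real CARD('a) ^ i)"
proof -
  have "Seq (Suc i) = (\<Union>vs\<in>Seq i. (\<lambda>v. v # vs) ` (SY (vec.span (set vs)) - vec.span (set vs)))"
    by (rule cons_set_eq) (use Seq_nonempty Seq_cons in auto)
  then have "card (Seq (Suc i)) = (\<Sum>vs\<in>Seq i. card (SY (vec.span (set vs)) - vec.span (set vs)))"
    using card_cons_family[OF Seq_fin] by simp
  then have "real (card (Seq (Suc i))) = (\<Sum>vs\<in>Seq i. real (card (SY (vec.span (set vs)) - vec.span (set vs))))"
    by simp
  also have "\<dots> = (\<Sum>vs\<in>Seq i. real CARD('a) ^ r + real CARD('a) powr e * real CARD('a) ^ (r - 1) * (real CARD('a) ^ (r - i) - 1)
      - real CARD('a) ^ i)"
    by (rule sum.cong) (auto simp: card_X1)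
  finally show ?thesis by simp
qed

lemma Seq_fibers:
  assumes "\<And>vs. vs \<in> S \<Longrightarrow> vs \<in> Seq k" and C: "\<And>vs. vs \<in> S \<Longrightarrow> vec.span (set vs) \<in> C"
    and CK: "C \<subseteq> k_spaces TIs k"
    and bk: "\<And>U vs. U \<in> C \<Longrightarrow> vs \<in> Seq k \<Longrightarrow> vec.span (set vs) = U \<Longrightarrow> vs \<in> S"
  shows "card S = card C * (\<Prod>i<k. CARD('a) ^ k - CARD('a) ^ i)"
proof -
  have finS: "finite S" by (rule finite_lists_len) (use assms(1) in \<open>auto simp: Seq_def\<close>)
  have fib: "{vs \<in> S. vec.span (set vs) = U} = Eset {} U k" if U: "U \<in> C" for U
  proof
    have Us: "vec.subspace U" "vec.dim U = k" "TIs U" using U CK by (auto simp: k_spaces_def)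
    show "{vs \<in> S. vec.span (set vs) = U} \<subseteq> Eset {} U k"
    proof
      fix vs assume "vs \<in> {vs \<in> S. vec.span (set vs) = U}"
      then have vs: "vs \<in> Seq k" and eq: "vec.span (set vs) = U" using assms(1) by auto
      have "set vs \<subseteq> U" using eq vec.span_superset by blast
      then show "vs \<in> Eset {} U k" using vs by (auto simp: Seq_def Eset_def)
    qed
    show "Eset {} U k \<subseteq> {vs \<in> S. vec.span (set vs) = U}"
    proof
      fix vs assume "vs \<in> Eset {} U k"
      then have v: "length vs = k" "set vs \<subseteq> U" "ext {} vs" by (auto simp: Eset_def)
      have eq: "vec.span (set vs) = U"
      proof (rule vec.subspace_dim_equal)
        show "vec.span (set vs) \<subseteq> U" by (rule vec.span_minimal[OF v(2) Us(1)])
        show "vec.dim U \<le> vec.dim (vec.span (set vs))" using dim_ext[OF v(3)] v(1) Us(2) by simp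
      qed (use Us in auto)
      have "TIs (vec.span (set vs))" using eq Us by simp
      then have "vs \<in> Seq k" using v by (simp add: Seq_def)
      then show "vs \<in> {vs \<in> S. vec.span (set vs) = U}" using bk[OF U _ eq] eq by simp
    qed
  qed
  have cU: "card (Eset {} U k) = (\<Prod>i<k. CARD('a) ^ k - CARD('a) ^ i)" if U: "U \<in> C" for U
  proof -
    have Us: "vec.subspace U" "vec.dim U = k" using U CK by (auto simp: k_spaces_def)
    show ?thesis using card_Eset[OF Us(1), of "{}" k] Us(2) by simp
  qed
  have "card S = (\<Sum>U\<in>C. card {vs \<in> S. vec.span (set vs) = U})"
    by (rule card_fibers) (use finS C in auto)
  also have "\<dots> = (\<Sum>U\<in>C. (\<Prod>i<k. CARD('a) ^ k - CARD('a) ^ i))"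
    by (rule sum.cong) (use fib cU in auto)
  finally show ?thesis by simp
qed

lemma card_Seq_kspaces: "card (Seq k) = card (k_spaces TIs k) * (\<Prod>i<k. CARD('a) ^ k - CARD('a) ^ i)"
  by (rule Seq_fibers) (auto simp: Seq_def k_spaces_def dim_ext0)

end


locale psp_p = psp_re +
  fixes p
  assumes p_sing: "sing p" and p_nz: "p \<noteq> 0"
begin

definition "Hp = perp B {p}"

lemma Hp_mem: "v \<in> Hp \<longleftrightarrow> B p v = 0" unfolding Hp_def perp_def by simp

definition "sg j = real CARD('a) ^ r + real CARD('a) powr e * real CARD('a) ^ (r - 1) * (real CARD('a) ^ (r - j) - 1)"

definition "As i = {vs \<in> Seq i. set vs \<subseteq> Hp \<and> p \<in> vec.span (set vs)}"
definition "Bs i = {vs \<in> Seq i. set vs \<subseteq> Hp \<and> p \<notin> vec.span (set vs)}"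

definition "X1 vs = SY (vec.span (set vs)) - vec.span (set vs)"
definition "X2 vs = vec.span (insert p (set vs)) - vec.span (set vs)"
definition "X3 vs = SY (vec.span (insert p (set vs))) - vec.span (insert p (set vs))"

lemma TIp:
  assumes "vs \<in> Seq i" "set vs \<subseteq> Hp"
  shows "TIs (vec.span (insert p (set vs)))"
proof -
  have "TIs (set vs)" using assms(1) by (simp add: Seq_def TIs_span)
  moreover have "p \<in> perp B (set vs)"
  proof -
    have "B s p = 0" if "s \<in> set vs" for s
    proof -
      have "B p s = 0" using that assms(2) Hp_mem by blast
      then show ?thesis using B_refl by blast
    qed
    then show ?thesis unfolding perp_def by blast
  qed
  ultimately show ?thesis using TIs_insert p_sing by blast
qed

lemma perp_insert: "perp B (insert a S) = {x. B a x = 0} \<inter> perp B S"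
  unfolding perp_def by auto

lemma As_cons: "v # vs \<in> As (Suc i) \<longleftrightarrow> (vs \<in> As i \<and> v \<in> X1 vs) \<or> (vs \<in> Bs i \<and> v \<in> X2 vs)"
proof -
  let ?S = "set vs" let ?U = "vec.span (set vs)"
  have L: "v # vs \<in> As (Suc i) \<longleftrightarrow> vs \<in> Seq i \<and> v \<in> X1 vs \<and> v \<in> Hp \<and> ?S \<subseteq> Hp \<and> p \<in> vec.span (insert v ?S)"
    unfolding As_def X1_def using Seq_cons by auto
  show ?thesis
  proof (cases "p \<in> ?U")
    case True
    have "v \<in> X1 vs \<Longrightarrow> v \<in> Hp" using True unfolding X1_def SY_def perp_def Hp_mem by blast
    moreover have "p \<in> vec.span (insert v ?S)" using True by (meson subset_insertI vec.span_mono subsetD)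
    ultimately show ?thesis using L True unfolding As_def Bs_def by auto
  next
    case False
    show ?thesis
    proof
      assume "v # vs \<in> As (Suc i)"
      then have h: "vs \<in> Seq i" "v \<in> X1 vs" "?S \<subseteq> Hp" "p \<in> vec.span (insert v ?S)" using L by auto
      have "v \<in> vec.span (insert p ?S)" using vec.in_span_insert[OF h(4) False] .
      then show "(vs \<in> As i \<and> v \<in> X1 vs) \<or> (vs \<in> Bs i \<and> v \<in> X2 vs)"
        using h False unfolding Bs_def X2_def X1_def by auto
    next
      assume "(vs \<in> As i \<and> v \<in> X1 vs) \<or> (vs \<in> Bs i \<and> v \<in> X2 vs)"
      then have h: "vs \<in> Bs i" "v \<in> X2 vs" using False unfolding As_def by auto
      have vs: "vs \<in> Seq i" "?S \<subseteq> Hp" using h(1) unfolding Bs_def by auto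
      have T: "TIs (vec.span (insert p ?S))" by (rule TIp[OF vs])
      have vin: "v \<in> vec.span (insert p ?S)" "v \<notin> ?U" using h(2) unfolding X2_def by auto
      have pin: "p \<in> vec.span (insert p ?S)" by (simp add: vec.span_base)
      have sin: "?S \<subseteq> vec.span (insert p ?S)" by (meson subset_insertI vec.span_superset subset_trans)
      have sv: "sing v" using T vin unfolding TIs_def by blast
      have "v \<in> perp B ?S" using T vin sin unfolding TIs_def perp_def by blast
      then have "v \<in> SY ?U" using sv unfolding SY_def perp_span by simp
      moreover have "v \<in> Hp" using T vin pin unfolding TIs_def Hp_mem by blast
      moreover have "p \<in> vec.span (insert v ?S)" using vec.in_span_insert[OF vin] .
      ultimately show "v # vs \<in> As (Suc i)" using L vs vin unfolding X1_def by auto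
    qed
  qed
qed

lemma Bs_cons: "v # vs \<in> Bs (Suc i) \<longleftrightarrow> vs \<in> Bs i \<and> v \<in> X3 vs"
proof -
  let ?S = "set vs" let ?U = "vec.span (set vs)"
  have L: "v # vs \<in> Bs (Suc i) \<longleftrightarrow> vs \<in> Seq i \<and> v \<in> X1 vs \<and> v \<in> Hp \<and> ?S \<subseteq> Hp \<and> p \<notin> vec.span (insert v ?S)"
    unfolding Bs_def X1_def using Seq_cons by auto
  have sub: "?U \<subseteq> vec.span (insert p ?S)" by (meson subset_insertI vec.span_mono)
  show ?thesis
  proof
    assume "v # vs \<in> Bs (Suc i)"
    then have h: "vs \<in> Seq i" "v \<in> X1 vs" "v \<in> Hp" "?S \<subseteq> Hp" "p \<notin> vec.span (insert v ?S)" using L by auto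
    have pU: "p \<notin> ?U" using h(5) by (meson subset_insertI vec.span_mono subsetD)
    have vU: "v \<notin> ?U" using h(2) unfolding X1_def by auto
    have "v \<notin> vec.span (insert p ?S)"
      using vec.in_span_insert[of v p ?S] vU h(5) by blast
    moreover have "v \<in> SY (vec.span (insert p ?S))"
      using h(2,3) unfolding X1_def SY_def perp_span perp_insert Hp_mem by auto
    ultimately show "vs \<in> Bs i \<and> v \<in> X3 vs" using h pU unfolding Bs_def X3_def by auto
  next
    assume "vs \<in> Bs i \<and> v \<in> X3 vs"
    then have h: "vs \<in> Seq i" "?S \<subseteq> Hp" "p \<notin> ?U" "v \<in> SY (vec.span (insert p ?S))"
      "v \<notin> vec.span (insert p ?S)" unfolding Bs_def X3_def by auto
    have vU: "v \<notin> ?U" using h(5) sub by blast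
    have "v \<in> X1 vs" "v \<in> Hp" using h(4) vU unfolding X1_def SY_def perp_span perp_insert Hp_mem by auto
    moreover have "p \<notin> vec.span (insert v ?S)"
      using vec.in_span_insert[of p v ?S] h(3,5) by blast
    ultimately show "v # vs \<in> Bs (Suc i)" using L h by auto
  qed
qed

lemma fin_As: "finite (As i)" and fin_Bs: "finite (Bs i)"
  by (rule finite_lists_len, auto simp: As_def Bs_def Seq_def)+

lemma card_X2:
  assumes "vs \<in> Bs i"
  shows "real (card (X2 vs)) = real CARD('a) ^ Suc i - real CARD('a) ^ i"
proof -
  have vs: "vs \<in> Seq i" "p \<notin> vec.span (set vs)" using assms unfolding Bs_def by auto
  have sub: "vec.span (set vs) \<subseteq> vec.span (insert p (set vs))" by (meson subset_insertI vec.span_mono)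
  have c1: "card (vec.span (set vs)) = CARD('a) ^ i" using card_span[of "set vs"] Seq_dim[OF vs(1)] by simp
  have c2: "card (vec.span (insert p (set vs))) = CARD('a) ^ Suc i"
    using card_span[of "insert p (set vs)"] Seq_dim[OF vs(1)] vs(2) by (simp add: vec.dim_insert)
  have "card (X2 vs) = card (vec.span (insert p (set vs))) - card (vec.span (set vs))"
    unfolding X2_def by (rule card_Diff_subset) (use sub in auto)
  moreover have "card (vec.span (set vs)) \<le> card (vec.span (insert p (set vs)))"
    by (rule card_mono) (use sub in auto)
  ultimately show ?thesis using c1 c2 by (simp add: of_nat_diff)
qed

lemma card_X3:
  assumes "vs \<in> Bs i"
  shows "real (card (X3 vs)) = sg (Suc i) - real CARD('a) ^ Suc i"
proof -
  have vs: "vs \<in> Seq i" "set vs \<subseteq> Hp" "p \<notin> vec.span (set vs)" using assms unfolding Bs_def by auto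
  let ?Y = "vec.span (insert p (set vs))"
  have T: "TIs ?Y" by (rule TIp[OF vs(1,2)])
  have d: "vec.dim ?Y = Suc i" using Seq_dim[OF vs(1)] vs(3) by (simp add: vec.dim_insert)
  have sub: "?Y \<subseteq> SY ?Y" by (rule span_in_SY[OF T]) simp
  have "card (X3 vs) = card (SY ?Y) - card ?Y" unfolding X3_def by (rule card_Diff_subset) (use sub in auto)
  moreover have "card ?Y \<le> card (SY ?Y)" by (rule card_mono) (use sub in auto)
  ultimately have "real (card (X3 vs)) = real (card (SY ?Y)) - real (card ?Y)" by (simp add: of_nat_diff)
  moreover have "card ?Y = CARD('a) ^ Suc i" using card_span[of "insert p (set vs)"] d by simp
  ultimately show ?thesis using card_SY[of ?Y] T d unfolding sg_def by simp
qed

lemma card_As_Suc: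
  "real (card (As (Suc i))) = real (card (As i)) * (sg i - real CARD('a) ^ i)
     + real (card (Bs i)) * (real CARD('a) ^ Suc i - real CARD('a) ^ i)"
proof -
  define X where "X vs = (if p \<in> vec.span (set vs) then X1 vs else X2 vs)" for vs
  have disj: "As i \<inter> Bs i = {}" unfolding As_def Bs_def by auto
  have "As (Suc i) = (\<Union>vs\<in>As i \<union> Bs i. (\<lambda>v. v # vs) ` X vs)"
  proof (rule cons_set_eq)
    show "ws \<noteq> []" if "ws \<in> As (Suc i)" for ws using that Seq_nonempty unfolding As_def by auto
    show "v # vs \<in> As (Suc i) \<longleftrightarrow> vs \<in> As i \<union> Bs i \<and> v \<in> X vs" for v vs
      using As_cons[of v vs i] unfolding X_def As_def Bs_def by auto
  qed
  then have "card (As (Suc i)) = (\<Sum>vs\<in>As i \<union> Bs i. card (X vs))"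
    using card_cons_family[of "As i \<union> Bs i" X] fin_As fin_Bs by simp
  also have "\<dots> = (\<Sum>vs\<in>As i. card (X vs)) + (\<Sum>vs\<in>Bs i. card (X vs))"
    by (rule sum.union_disjoint) (use fin_As fin_Bs disj in auto)
  finally have "real (card (As (Suc i))) = (\<Sum>vs\<in>As i. real (card (X vs))) + (\<Sum>vs\<in>Bs i. real (card (X vs)))"
    by simp
  also have "(\<Sum>vs\<in>As i. real (card (X vs))) = (\<Sum>vs\<in>As i. sg i - real CARD('a) ^ i)"
  proof (rule sum.cong)
    fix vs assume "vs \<in> As i"
    then have "vs \<in> Seq i" "p \<in> vec.span (set vs)" unfolding As_def by auto
    then show "real (card (X vs)) = sg i - real CARD('a) ^ i"
      unfolding X_def X1_def sg_def using card_X1 by simp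
  qed simp
  also have "(\<Sum>vs\<in>Bs i. real (card (X vs))) = (\<Sum>vs\<in>Bs i. real CARD('a) ^ Suc i - real CARD('a) ^ i)"
  proof (rule sum.cong)
    fix vs assume vs: "vs \<in> Bs i"
    then have "p \<notin> vec.span (set vs)" unfolding Bs_def by auto
    then show "real (card (X vs)) = real CARD('a) ^ Suc i - real CARD('a) ^ i"
      unfolding X_def using card_X2[OF vs] by simp
  qed simp
  finally show ?thesis by (simp add: mult.commute)
qed

lemma card_Bs_Suc:
  "real (card (Bs (Suc i))) = real (card (Bs i)) * (sg (Suc i) - real CARD('a) ^ Suc i)"
proof -
  have "Bs (Suc i) = (\<Union>vs\<in>Bs i. (\<lambda>v. v # vs) ` X3 vs)"
  proof (rule cons_set_eq)
    show "ws \<noteq> []" if "ws \<in> Bs (Suc i)" for ws using that Seq_nonempty unfolding Bs_def by auto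
    show "v # vs \<in> Bs (Suc i) \<longleftrightarrow> vs \<in> Bs i \<and> v \<in> X3 vs" for v vs by (rule Bs_cons)
  qed
  then have "card (Bs (Suc i)) = (\<Sum>vs\<in>Bs i. card (X3 vs))"
    using card_cons_family[of "Bs i" X3] fin_Bs by simp
  then have "real (card (Bs (Suc i))) = (\<Sum>vs\<in>Bs i. real (card (X3 vs)))" by simp
  also have "\<dots> = (\<Sum>vs\<in>Bs i. sg (Suc i) - real CARD('a) ^ Suc i)"
    by (rule sum.cong) (use card_X3 in auto)
  finally show ?thesis by (simp add: mult.commute)
qed

lemma invariants:
  "(sg 0 - 1) * real (card (As i)) = real (card (Seq i)) * (real CARD('a) ^ i - 1) \<and>
   (sg 0 - 1) * real (card (Bs i)) = real (card (Seq i)) * (sg i - real CARD('a) ^ i)"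
proof (induction i)
  case 0
  have s0: "Seq 0 = {[]}" unfolding Seq_def by (auto simp: TIs_def sing_0)
  have "As 0 = {}" unfolding As_def Seq_def using p_nz by auto
  moreover have "Bs 0 = {[]}" unfolding Bs_def Seq_def using p_nz by (auto simp: TIs_def sing_0)
  ultimately show ?case using s0 by simp
next
  case (Suc i)
  define s0 where "s0 = sg 0 - 1"
  define a where "a = real (card (As i))"
  define b where "b = real (card (Bs i))"
  define n where "n = real (card (Seq i))"
  define Q where "Q = real CARD('a)"
  have IH: "s0 * a = n * (Q ^ i - 1)" "s0 * b = n * (sg i - Q ^ i)"
    using Suc unfolding s0_def a_def b_def n_def Q_def by auto
  have ra: "real (card (As (Suc i))) = a * (sg i - Q ^ i) + b * (Q ^ Suc i - Q ^ i)"
    using card_As_Suc unfolding a_def b_def Q_def by simp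
  have rb: "real (card (Bs (Suc i))) = b * (sg (Suc i) - Q ^ Suc i)"
    using card_Bs_Suc unfolding b_def Q_def by simp
  have rn: "real (card (Seq (Suc i))) = n * (sg i - Q ^ i)"
    using card_Seq_Suc unfolding n_def Q_def sg_def by simp
  have "s0 * real (card (As (Suc i))) = (s0 * a) * (sg i - Q ^ i) + (s0 * b) * (Q ^ Suc i - Q ^ i)"
    unfolding ra by (simp add: algebra_simps)
  also have "\<dots> = n * (sg i - Q ^ i) * (Q ^ Suc i - 1)" unfolding IH by (simp add: algebra_simps)
  finally have A: "s0 * real (card (As (Suc i))) = real (card (Seq (Suc i))) * (Q ^ Suc i - 1)"
    unfolding rn .
  have "s0 * real (card (Bs (Suc i))) = (s0 * b) * (sg (Suc i) - Q ^ Suc i)"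
    unfolding rb by (simp add: algebra_simps)
  also have "\<dots> = real (card (Seq (Suc i))) * (sg (Suc i) - Q ^ Suc i)" unfolding IH rn by simp
  finally show ?case using A unfolding s0_def Q_def by simp
qed

lemma main_ratio:
  "(sg 0 - 1) * real (card {U \<in> k_spaces TIs k. U \<subseteq> Hp})
     = real (card (k_spaces TIs k)) * (sg k - 1)"
proof -
  define \<beta> where "\<beta> = (\<Prod>i<k. CARD('a) ^ k - CARD('a) ^ i)"
  have b0: "\<beta> > 0" unfolding \<beta>_def
  proof (rule prod_pos)
    fix i assume "i \<in> {..<k}"
    then have "CARD('a) ^ i < CARD('a) ^ k"
      by (intro power_strict_increasing) (use card_field_ge2[where 'a='a] in auto)
    then show "0 < CARD('a) ^ k - CARD('a) ^ i" by simp
  qed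
  have Hs: "vec.subspace Hp" unfolding Hp_def by (rule perp_subspace)
  define TH where "TH = {vs \<in> Seq k. set vs \<subseteq> Hp}"
  have c1: "card TH = card {U \<in> k_spaces TIs k. U \<subseteq> Hp} * \<beta>"
    unfolding \<beta>_def
  proof (rule Seq_fibers)
    show "vs \<in> Seq k" if "vs \<in> TH" for vs using that TH_def by auto
    show "vec.span (set vs) \<in> {U \<in> k_spaces TIs k. U \<subseteq> Hp}" if "vs \<in> TH" for vs
    proof -
      have v: "length vs = k" "ext {} vs" "TIs (vec.span (set vs))" "set vs \<subseteq> Hp"
        using that unfolding TH_def Seq_def by auto
      have "vec.span (set vs) \<subseteq> Hp" by (rule vec.span_minimal[OF v(4) Hs])
      then show ?thesis using v unfolding k_spaces_def by (simp add: dim_ext0)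
    qed
    show "{U \<in> k_spaces TIs k. U \<subseteq> Hp} \<subseteq> k_spaces TIs k" by blast
    show "vs \<in> TH" if "U \<in> {U \<in> k_spaces TIs k. U \<subseteq> Hp}" "vs \<in> Seq k" "vec.span (set vs) = U" for U vs
      using that vec.span_superset unfolding TH_def by blast
  qed
  have c2: "card (Seq k) = card (k_spaces TIs k) * \<beta>" unfolding \<beta>_def by (rule card_Seq_kspaces)
  have "TH = As k \<union> Bs k" unfolding TH_def As_def Bs_def by auto
  moreover have "As k \<inter> Bs k = {}" unfolding As_def Bs_def by auto
  ultimately have "card TH = card (As k) + card (Bs k)" using fin_As fin_Bs by (simp add: card_Un_disjoint)
  then have "(sg 0 - 1) * real (card TH) = real (card (Seq k)) * (sg k - 1)"
    using invariants[of k] by (simp add: algebra_simps)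
  then have "(sg 0 - 1) * real (card {U \<in> k_spaces TIs k. U \<subseteq> Hp}) * real \<beta>
      = real (card (k_spaces TIs k)) * (sg k - 1) * real \<beta>"
    unfolding c1 c2 by (simp add: algebra_simps)
  then show ?thesis using b0 by simp
qed

end


lemma classical_to_psp:
  fixes B :: "'a::{finite,field}^'n \<Rightarrow> 'a^'n \<Rightarrow> 'a" and TI :: "('a^'n) set \<Rightarrow> bool"
  assumes "classical_polar_space B TI"
  shows "\<exists>sing. psp B sing \<and> (\<forall>U. vec.subspace U \<longrightarrow> TI U = psp.TIs B sing U)"
  using assms unfolding classical_polar_space_def
proof (elim disjE conjE exE)
  assume cs: "classical_sesquilinear_form B" and TI: "TI = (\<lambda>U. \<forall>u\<in>U. \<forall>v\<in>U. B u v = 0)"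
  from cs obtain \<sigma> where s: "sesquilinear \<sigma> B" and rf: "reflexive_form B"
    unfolding classical_sesquilinear_form_def by blast
  have add1: "B (x + y) z = B x z + B y z" for x y z using s unfolding sesquilinear_def by blast
  have add2: "B x (y + z) = B x y + B x z" for x y z using s unfolding sesquilinear_def by blast
  have sc1: "B (c *s x) y = c * B x y" for c x y using s unfolding sesquilinear_def by blast
  have sc2: "B x (c *s y) = \<sigma> c * B x y" for c x y using s unfolding sesquilinear_def by blast
  have refl: "B x y = 0 \<longleftrightarrow> B y x = 0" for x y using rf unfolding reflexive_form_def by blast
  have z: "B 0 y = 0" for y using sc1[of 0 0 y] by simp
  have ps: "psp B (\<lambda>x. B x x = 0)"
  proof
    show "B (x + y) z = B x z + B y z" for x y z by (rule add1)
    show "B (c *s x) y = c * B x y" for c x y by (rule sc1)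
    show "B x y = 0 \<longleftrightarrow> B y x = 0" for x y by (rule refl)
    show "B 0 0 = 0" by (rule z)
    show "B (x + y) (x + y) = 0" if "B x x = 0" "B y y = 0" "B x y = 0" for x y
    proof -
      have "B y x = 0" using that refl by blast
      then show ?thesis using that by (simp add: add1 add2)
    qed
    show "B (c *s x) (c *s x) = 0" if "B x x = 0" for c x using that by (simp add: sc1 sc2)
    show "B x x = 0" if "B x x = 0" for x using that .
  qed
  moreover have "\<forall>U. vec.subspace U \<longrightarrow> TI U = psp.TIs B (\<lambda>x. B x x = 0) U"
    using psp.TIs_def[OF ps] TI by auto
  ultimately show ?thesis by blast
next
  fix Q assume nq: "nondegenerate_quadratic_form Q" and BQ: "B = polar_form Q"
    and TI: "TI = (\<lambda>U. \<forall>u\<in>U. Q u = 0)"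
  have q: "quadratic_form Q" using nq unfolding nondegenerate_quadratic_form_def by blast
  then have Qs: "Q (c *s x) = c^2 * Q x" for c x unfolding quadratic_form_def by blast
  have s: "sesquilinear id (polar_form Q)" using q unfolding quadratic_form_def by blast
  have add1: "B (x + y) z = B x z + B y z" for x y z using s BQ unfolding sesquilinear_def by blast
  have sc1: "B (c *s x) y = c * B x y" for c x y using s BQ unfolding sesquilinear_def by blast
  have symm: "B x y = B y x" for x y unfolding BQ polar_form_def by (simp add: add.commute)
  have Q0: "Q 0 = 0" using Qs[of 0 0] by simp
  have ps: "psp B (\<lambda>x. Q x = 0)"
  proof
    show "B (x + y) z = B x z + B y z" for x y z by (rule add1)
    show "B (c *s x) y = c * B x y" for c x y by (rule sc1)
    show "B x y = 0 \<longleftrightarrow> B y x = 0" for x y using symm by simp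
    show "Q 0 = 0" by (rule Q0)
    show "Q (x + y) = 0" if "Q x = 0" "Q y = 0" "B x y = 0" for x y
      using that unfolding BQ polar_form_def by simp
    show "Q (c *s x) = 0" if "Q x = 0" for c x using that Qs by simp
    show "B x x = 0" if "Q x = 0" for x
    proof -
      have "(1 + 1) *s x = x + x" by (simp only: vector_sadd_rdistrib vector_smult_lid)
      then have "x + x = (1 + 1) *s x" by simp
      then have "Q (x + x) = 0" using Qs[of "1 + 1" x] that by simp
      then show ?thesis using that unfolding BQ polar_form_def by simp
    qed
  qed
  moreover have "\<forall>U. vec.subspace U \<longrightarrow> TI U = psp.TIs B (\<lambda>x. Q x = 0) U"
  proof (intro allI impI)
    fix U :: "('a^'n) set" assume U: "vec.subspace U"
    have "(\<forall>u\<in>U. Q u = 0) \<longrightarrow> (\<forall>u\<in>U. \<forall>v\<in>U. B u v = 0)"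
      using U unfolding BQ polar_form_def by (auto simp: vec.subspace_add)
    then show "TI U = psp.TIs B (\<lambda>x. Q x = 0) U" using psp.TIs_def[OF ps] TI by auto
  qed
  ultimately show ?thesis by blast
qed

lemma kspaces_eq:
  assumes "\<forall>U. vec.subspace U \<longrightarrow> TI U = TI' U"
  shows "k_spaces TI k = k_spaces TI' k"
  using assms unfolding k_spaces_def by auto

theorem lemma5p2:
  fixes B :: "'a::{finite,field}^'n \<Rightarrow> 'a^'n \<Rightarrow> 'a"
    and TI :: "('a^'n) set \<Rightarrow> bool"
    and r k :: nat and e :: real and P H :: "('a^'n) set"
  assumes "classical_polar_space B TI"
    and "polar_rank TI r"
    and "polar_parameter TI r e"
    and "r \<ge> k + 1"
    and "P \<in> k_spaces TI 1"
    and "H = perp B P"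
  shows "real (card {U \<in> k_spaces TI k. U \<subseteq> H}) =
           (real CARD('a) powr (2*r + e - k - 1) + real CARD('a) ^ r
              - real CARD('a) powr (r + e - 1) - 1)
           / ((real CARD('a) ^ r - 1) * (real CARD('a) powr (r + e - 1) + 1))
           * real (card (k_spaces TI k))"
proof -
  obtain sing where ps: "psp B sing" and ag: "\<forall>U. vec.subspace U \<longrightarrow> TI U = psp.TIs B sing U"
    using classical_to_psp[OF assms(1)] by blast
  define T where "T = psp.TIs B sing"
  have kse: "k_spaces TI j = k_spaces T j" for j using kspaces_eq ag T_def by blast
  have rk: "polar_rank T r" using assms(2) ag unfolding polar_rank_def kse T_def by auto
  have pa: "polar_parameter T r e" using assms(3) unfolding polar_parameter_def kse .
  have r1: "r \<ge> 1" using assms(4) by simp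
  have "psp_re B sing r e"
    unfolding psp_re_def psp_re_axioms_def psp_r_def psp_r_axioms_def using ps rk pa r1 T_def by auto
  then interpret pr: psp_re B sing r e .
  have PT: "P \<in> k_spaces T 1" using assms(5) kse by simp
  then have Ps: "vec.subspace P" "vec.dim P = 1" "T P" by (auto simp: k_spaces_def)
  obtain Bb where Bb: "Bb \<subseteq> P" "vec.independent Bb" "P \<subseteq> vec.span Bb" "card Bb = vec.dim P"
    using vec.basis_exists by blast
  then obtain p where p: "Bb = {p}" using Ps(2) by (metis card_1_singletonE)
  have pnz: "p \<noteq> 0" using Bb(2) p by simp
  have pP: "p \<in> P" using Bb(1) p by simp
  have Pspan: "P = vec.span {p}"
  proof
    show "P \<subseteq> vec.span {p}" using Bb(3) p by simp
    show "vec.span {p} \<subseteq> P" by (rule vec.span_minimal) (use pP Ps(1) in auto)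
  qed
  have sp: "sing p" using Ps(3) pP unfolding T_def pr.TIs_def by blast
  have "psp_p B sing r e p"
    unfolding psp_p_def psp_p_axioms_def using pr.psp_re_axioms sp pnz by auto
  then interpret pp: psp_p B sing r e p .
  have HH: "H = pp.Hp" unfolding assms(6) pp.Hp_def Pspan pr.perp_span ..
  define q where "q = real CARD('a)"
  have q2: "q \<ge> 2" unfolding q_def using card_field_ge2[where 'a='a] by simp
  define X where "X = q powr (r + e - 1)"
  have X: "X = q powr e * q ^ (r - 1)"
  proof -
    have h: "r + e - 1 = e + real (r - 1)" using r1 by (simp add: of_nat_diff)
    show ?thesis unfolding X_def h powr_add using q2 by (simp add: powr_realpow)
  qed
  have X2: "q powr (2*r + e - k - 1) = X * q ^ (r - k)"
  proof -
    have h: "2*r + e - k - 1 = (r + e - 1) + real (r - k)" using assms(4) by (simp add: of_nat_diff)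
    show ?thesis unfolding X_def h powr_add using q2 by (simp add: powr_realpow)
  qed
  have Xp: "X > 0" unfolding X_def using q2 by simp
  have qr: "q ^ r > 1" using q2 r1 by (simp add: one_less_power)
  have s0: "pp.sg 0 - 1 = (q ^ r - 1) * (X + 1)"
    unfolding pp.sg_def q_def[symmetric] X by (simp add: algebra_simps)
  have sk: "pp.sg k - 1 = X * q ^ (r - k) + q ^ r - X - 1"
    unfolding pp.sg_def q_def[symmetric] X by (simp add: algebra_simps)
  have mr: "(pp.sg 0 - 1) * real (card {U \<in> k_spaces T k. U \<subseteq> pp.Hp}) = real (card (k_spaces T k)) * (pp.sg k - 1)"
    using pp.main_ratio unfolding T_def .
  have nz: "(q ^ r - 1) * (X + 1) \<noteq> 0" using qr Xp by simp
  have "real (card {U \<in> k_spaces T k. U \<subseteq> pp.Hp}) = (X * q ^ (r - k) + q ^ r - X - 1) / ((q ^ r - 1) * (X + 1)) * real (card (k_spaces T k))"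
    using mr nz unfolding s0 sk by (simp add: field_simps)
  then show ?thesis unfolding kse HH X2 X_def[symmetric] q_def[symmetric] by simp
qed


end
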